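(* For every $(a',b',c')\in\mathbb{C}^3$, the formal deformation $(\{\cdot,\cdot\}^{[a',b',c']}_n)_{n\ge0}$ of $\widetilde J$ is modular-isomorphic to one of the following: (1) $(\{\cdot,\cdot\}^{[1,b,c]}_n)_{n\ge0}$ for some $(b,c)\in\mathbb{C}^2$; (2) $(\{\cdot,\cdot\}^{[0,1,c]}_n)_{n\ge0}$ for some $c\in\mathbb{C}$; (3) $(\{\cdot,\cdot\}^{[0,0,c]}_n)_{n\ge0}$ for some $c\in\mathbb{C}$. Moreover, any two distinct deformations in this list (distinct families, or the same family with different parameter values) are not modular-isomorphic.
   Context: Let $\widetilde J=\mathbb{C}[E_4,E_6,A,B]$ be the polynomial algebra in four algebraically independent variables, bigraded by weight and index, where $E_4$ has weight $4$ and index $0$, $E_6$ has weight $6$ and index $0$, $A$ has weight $-2$ and index $1$, $B$ has weight $0$ and index $1$; $\widetilde J_{k,p}$ denotes the homogeneous component of weight $k$ and index $p$. (This is the algebra of weak Jacobi forms of even weight on $\mathrm{SL}(2,\mathbb{Z})$.) For $(a,b)\in\mathbb{C}^2$, $S_{a,b}$ is the derivation of $\widetilde J$ with $S_{a,b}(E_4)=-\tfrac13E_6$, $S_{a,b}(E_6)=-\tfrac12E_4^2$, $S_{a,b}(A)=aB$, $S_{a,b}(B)=bE_4A$. For $c\in\mathbb{C}$ and $n\ge0$, $\{\cdot,\cdot\}^{[a,b,c]}_n$ is the bilinear map on $\widetilde J$ defined on homogeneous $f\in\widetilde J_{k,p}$, $g\in\widetilde J_{\ell,q}$ by $\{f,g\}^{[a,b,c]}_n=\sum_{r=0}^n(-1)^r\binom{k+cp+n-1}{n-r}\binom{\ell+cq+n-1}{r}S_{a,b}^r(f)\,S_{a,b}^{n-r}(g)$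 (complex binomial coefficients $\binom{x}{m}=x(x-1)\cdots(x-m+1)/m!$). Each such sequence is a formal deformation of $\widetilde J$. Two such formal deformations $(\{\cdot,\cdot\}^{[a,b,c]}_n)_n$ and $(\{\cdot,\cdot\}^{[a',b',c']}_n)_n$ are modular-isomorphic if there is a $\mathbb{C}$-linear bijection $\phi:\widetilde J\to\widetilde J$ mapping each $\widetilde J_{k,p}$ into $\widetilde J_{k,p}$ and such that $\phi(\{f,g\}^{[a,b,c]}_j)=\{\phi(f),\phi(g)\}^{[a',b',c']}_j$ for all $j\ge0$ and $f,g\in\widetilde J$. *)

theory Defs
  imports Complex_Main "HOL-Library.Poly_Mapping" "HOL-Library.Product_Plus"
begin

text \<open>Monomials E4^i E6^j A^k B^l are encoded by exponent vectors (i,j,k,l);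
  the polynomial algebra C[E4,E6,A,B] is the type of finitely supported
  maps from monomials to complex coefficients, with convolution product.\<close>

type_synonym mono = "nat \<times> nat \<times> nat \<times> nat"
type_synonym jpoly = "mono \<Rightarrow>\<^sub>0 complex"

definition mono_wt :: "mono \<Rightarrow> int" where
  "mono_wt m = (case m of (i,j,k,l) \<Rightarrow> 4 * int i + 6 * int j - 2 * int k)"

definition mono_ind :: "mono \<Rightarrow> int" where
  "mono_ind m = (case m of (i,j,k,l) \<Rightarrow> int k + int l)"

definition cst :: "complex \<Rightarrow> jpoly" where
  "cst c = Poly_Mapping.single (0,0,0,0) c"

definition E4 :: jpoly where "E4 = Poly_Mapping.single (1,0,0,0) 1"
definition E6 :: jpoly where "E6 = Poly_Mapping.single (0,1,0,0) 1"
definition vA :: jpoly where "vA = Poly_Mapping.single (0,0,1,0) 1"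
definition vB :: jpoly where "vB = Poly_Mapping.single (0,0,0,1) 1"

definition homog :: "int \<Rightarrow> int \<Rightarrow> jpoly \<Rightarrow> bool" where
  "homog k p f \<longleftrightarrow> (\<forall>m \<in> Poly_Mapping.keys f. mono_wt m = k \<and> mono_ind m = p)"

definition comp :: "int \<Rightarrow> int \<Rightarrow> jpoly \<Rightarrow> jpoly" where
  "comp k p f = (\<Sum>m \<in> {m \<in> Poly_Mapping.keys f. mono_wt m = k \<and> mono_ind m = p}.
                    Poly_Mapping.single m (Poly_Mapping.lookup f m))"

definition bidegs :: "jpoly \<Rightarrow> (int \<times> int) set" where
  "bidegs f = (\<lambda>m. (mono_wt m, mono_ind m)) ` Poly_Mapping.keys f"

definition pdE4 :: "jpoly \<Rightarrow> jpoly" where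
  "pdE4 f = (\<Sum>m \<in> Poly_Mapping.keys f. case m of (i,j,k,l) \<Rightarrow>
              Poly_Mapping.single (i - 1, j, k, l) (of_nat i * Poly_Mapping.lookup f m))"
definition pdE6 :: "jpoly \<Rightarrow> jpoly" where
  "pdE6 f = (\<Sum>m \<in> Poly_Mapping.keys f. case m of (i,j,k,l) \<Rightarrow>
              Poly_Mapping.single (i, j - 1, k, l) (of_nat j * Poly_Mapping.lookup f m))"
definition pdA :: "jpoly \<Rightarrow> jpoly" where
  "pdA f = (\<Sum>m \<in> Poly_Mapping.keys f. case m of (i,j,k,l) \<Rightarrow>
              Poly_Mapping.single (i, j, k - 1, l) (of_nat k * Poly_Mapping.lookup f m))"
definition pdB :: "jpoly \<Rightarrow> jpoly" where
  "pdB f = (\<Sum>m \<in> Poly_Mapping.keys f. case m of (i,j,k,l) \<Rightarrow>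
              Poly_Mapping.single (i, j, k, l - 1) (of_nat l * Poly_Mapping.lookup f m))"

definition Sder :: "complex \<Rightarrow> complex \<Rightarrow> jpoly \<Rightarrow> jpoly" where
  "Sder a b f = pdE4 f * (cst (-1/3) * E6) + pdE6 f * (cst (-1/2) * E4 ^ 2)
              + pdA f * (cst a * vB) + pdB f * (cst b * E4 * vA)"

definition bracket_h :: "complex \<Rightarrow> complex \<Rightarrow> complex \<Rightarrow> nat \<Rightarrow>
    int \<Rightarrow> int \<Rightarrow> int \<Rightarrow> int \<Rightarrow> jpoly \<Rightarrow> jpoly \<Rightarrow> jpoly" where
  "bracket_h a b c n k p l q f g =
     (\<Sum>r = 0..n. cst ((-1) ^ r
          * ((of_int k + c * of_int p + of_nat n - 1) gchoose (n - r))
          * ((of_int l + c * of_int q + of_nat n - 1) gchoose r))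
        * (((Sder a b) ^^ r) f * ((Sder a b) ^^ (n - r)) g))"

definition bracket :: "complex \<Rightarrow> complex \<Rightarrow> complex \<Rightarrow> nat \<Rightarrow> jpoly \<Rightarrow> jpoly \<Rightarrow> jpoly" where
  "bracket a b c n f g =
     (\<Sum>(k,p) \<in> bidegs f. \<Sum>(l,q) \<in> bidegs g.
        bracket_h a b c n k p l q (comp k p f) (comp l q g))"

definition modular_iso :: "complex \<times> complex \<times> complex \<Rightarrow> complex \<times> complex \<times> complex \<Rightarrow> bool" where
  "modular_iso t t' = (case t of (a,b,c) \<Rightarrow> case t' of (a',b',c') \<Rightarrow>
     (\<exists>\<phi> :: jpoly \<Rightarrow> jpoly.
        bij \<phi>
      \<and> (\<forall>f g. \<phi> (f + g) = \<phi> f + \<phi> g)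
      \<and> (\<forall>z f. \<phi> (cst z * f) = cst z * \<phi> f)
      \<and> (\<forall>k p f. homog k p f \<longrightarrow> homog k p (\<phi> f))
      \<and> (\<forall>j f g. \<phi> (bracket a b c j f g) = bracket a' b' c' j (\<phi> f) (\<phi> g))))"

definition canonical_list :: "(complex \<times> complex \<times> complex) set" where
  "canonical_list = {(1, b, c) | b c. True} \<union> {(0, 1, c) | c. True} \<union> {(0, 0, c) | c. True}"

end

theory Submission
  imports Defs
begin


lemma zero_mono: "(0::mono) = (0,0,0,0)" by (simp add: zero_prod_def)

lemma poly_decomp: "f = (\<Sum>m\<in>Poly_Mapping.keys f. Poly_Mapping.single m (Poly_Mapping.lookup f m))"
proof (rule poly_mapping_eqI)
  fix x
  show "Poly_Mapping.lookup f x = Poly_Mapping.lookup (\<Sum>m\<in>Poly_Mapping.keys f. Poly_Mapping.single m (Poly_Mapping.lookup f m)) x"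
    by (cases "x \<in> Poly_Mapping.keys f")
       (simp_all add: lookup_sum lookup_single when_def in_keys_iff)
qed

definition wt :: "complex \<Rightarrow> mono \<Rightarrow> complex" where
  "wt \<beta> m = \<beta> ^ (snd (snd (snd m)))"

definition phi :: "complex \<Rightarrow> jpoly \<Rightarrow> jpoly" where
  "phi \<beta> f = Poly_Mapping.mapp (\<lambda>m x. wt \<beta> m * x) f"

lemma lookup_phi: "Poly_Mapping.lookup (phi \<beta> f) m = wt \<beta> m * Poly_Mapping.lookup f m"
  by (auto simp: phi_def lookup_mapp when_def in_keys_iff)

lemma phi_add: "phi \<beta> (f + g) = phi \<beta> f + phi \<beta> g"
  by (rule poly_mapping_eqI) (simp add: lookup_phi lookup_add algebra_simps)

lemma phi_zero: "phi \<beta> 0 = 0"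
  by (rule poly_mapping_eqI) (simp add: lookup_phi)

lemma phi_sum: "phi \<beta> (sum F S) = (\<Sum>x\<in>S. phi \<beta> (F x))"
  by (induction S rule: infinite_finite_induct) (simp_all add: phi_zero phi_add)

lemma phi_single: "phi \<beta> (Poly_Mapping.single m c) = Poly_Mapping.single m (wt \<beta> m * c)"
  by (rule poly_mapping_eqI) (simp add: lookup_phi lookup_single when_def)

lemma wt_add: "wt \<beta> (m + n) = wt \<beta> m * wt \<beta> n"
  by (cases m; cases n) (simp add: wt_def power_add)

lemma update_eq: "a \<notin> Poly_Mapping.keys f \<Longrightarrow> Poly_Mapping.update a b f = f + Poly_Mapping.single a b"
  by (rule poly_mapping_eqI) (auto simp: lookup_update lookup_add lookup_single when_def in_keys_iff)

lemma phi_mult_single: "phi \<beta> (Poly_Mapping.single m c * g) = phi \<beta> (Poly_Mapping.single m c) * phi \<beta> g"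
proof (induction g rule: update_induct)
  case const then show ?case by (simp add: phi_zero)
next
  case (update f a b)
  then show ?case
    by (simp add: update_eq distrib_left phi_add phi_single mult_single wt_add mult_ac)
qed

lemma phi_mult: "phi \<beta> (f * g) = phi \<beta> f * phi \<beta> g"
proof (induction f rule: update_induct)
  case const then show ?case by (simp add: phi_zero)
next
  case (update f a b)
  then show ?case
    by (simp add: update_eq distrib_right phi_add phi_mult_single)
qed

lemma keys_phi: "\<beta> \<noteq> 0 \<Longrightarrow> Poly_Mapping.keys (phi \<beta> f) = Poly_Mapping.keys f"
  by (auto simp: in_keys_iff lookup_phi wt_def)

lemma phi_inv: "\<beta> \<noteq> 0 \<Longrightarrow> phi (1/\<beta>) (phi \<beta> f) = f"
  by (rule poly_mapping_eqI) (simp add: lookup_phi wt_def power_divide field_simps)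

lemma cst_mult_single: "cst z * Poly_Mapping.single m c = Poly_Mapping.single m (z * c)"
  by (simp add: cst_def mult_single zero_mono[symmetric])

lemma phi_cst: "phi \<beta> (cst z) = cst z"
  by (simp add: cst_def phi_single wt_def)




lemma pdE4_phi: "\<beta> \<noteq> 0 \<Longrightarrow> pdE4 (phi \<beta> f) = phi \<beta> (pdE4 f)"
  unfolding pdE4_def phi_sum keys_phi
  by (rule sum.cong) (auto simp: lookup_phi phi_single wt_def mult_ac split: prod.split)

lemma pdE6_phi: "\<beta> \<noteq> 0 \<Longrightarrow> pdE6 (phi \<beta> f) = phi \<beta> (pdE6 f)"
  unfolding pdE6_def phi_sum keys_phi
  by (rule sum.cong) (auto simp: lookup_phi phi_single wt_def mult_ac split: prod.split)

lemma pdA_phi: "\<beta> \<noteq> 0 \<Longrightarrow> pdA (phi \<beta> f) = phi \<beta> (pdA f)"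
  unfolding pdA_def phi_sum keys_phi
  by (rule sum.cong) (auto simp: lookup_phi phi_single wt_def mult_ac split: prod.split)

lemma pdB_phi: "\<beta> \<noteq> 0 \<Longrightarrow> pdB (phi \<beta> f) = cst \<beta> * phi \<beta> (pdB f)"
  unfolding pdB_def phi_sum keys_phi sum_distrib_left
proof (rule sum.cong)
  fix m assume "m \<in> Poly_Mapping.keys f"
  obtain i j k l where m: "m = (i,j,k,l)" by (cases m) auto
  then show "(case m of (i, j, k, l) \<Rightarrow> Poly_Mapping.single (i, j, k, l - 1) (of_nat l * Poly_Mapping.lookup (phi \<beta> f) m)) =
         cst \<beta> * phi \<beta> (case m of (i, j, k, l) \<Rightarrow> Poly_Mapping.single (i, j, k, l - 1) (of_nat l * Poly_Mapping.lookup f m))"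
    by (cases l) (simp_all add: m lookup_phi phi_single wt_def cst_mult_single mult_ac phi_zero)
qed simp

lemma phi_E4: "phi \<beta> E4 = E4" by (simp add: E4_def phi_single wt_def)
lemma phi_E6: "phi \<beta> E6 = E6" by (simp add: E6_def phi_single wt_def)
lemma phi_vA: "phi \<beta> vA = vA" by (simp add: vA_def phi_single wt_def)
lemma phi_vB: "phi \<beta> vB = cst \<beta> * vB" by (simp add: vB_def phi_single wt_def cst_mult_single)

lemma cst_mult: "cst x * cst y = cst (x * y)"
  by (simp add: cst_def mult_single)

lemma Sder_phi:
  assumes "\<beta> \<noteq> 0" "a * \<beta> = a'" "b = \<beta> * b'"
  shows "Sder a' b' (phi \<beta> f) = phi \<beta> (Sder a b f)"
proof -
  have 1: "cst a' = cst a * cst \<beta>" using assms by (simp add: cst_mult)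
  have 2: "cst b = cst \<beta> * cst b'" using assms by (simp add: cst_mult)
  show ?thesis
    unfolding Sder_def phi_add phi_mult phi_cst phi_E4 phi_E6 phi_vA phi_vB power2_eq_square
      pdE4_phi[OF assms(1)] pdE6_phi[OF assms(1)] pdA_phi[OF assms(1)] pdB_phi[OF assms(1)] 1 2
    by (simp add: mult_ac)
qed

lemma Sder_pow_phi:
  assumes "\<beta> \<noteq> 0" "a * \<beta> = a'" "b = \<beta> * b'"
  shows "(Sder a' b' ^^ r) (phi \<beta> f) = phi \<beta> ((Sder a b ^^ r) f)"
  by (induction r) (simp_all add: Sder_phi[OF assms])

lemma comp_phi: "\<beta> \<noteq> 0 \<Longrightarrow> comp k p (phi \<beta> f) = phi \<beta> (comp k p f)"
  unfolding comp_def phi_sum keys_phi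
  by (rule sum.cong) (auto simp: lookup_phi phi_single)

lemma bidegs_phi: "\<beta> \<noteq> 0 \<Longrightarrow> bidegs (phi \<beta> f) = bidegs f"
  by (simp add: bidegs_def keys_phi)

lemma phi_cst_mult: "phi \<beta> (cst z * f) = cst z * phi \<beta> f"
  by (simp add: phi_mult phi_cst)

lemma bracket_phi:
  assumes "\<beta> \<noteq> 0" "a * \<beta> = a'" "b = \<beta> * b'"
  shows "phi \<beta> (bracket a b c n f g) = bracket a' b' c n (phi \<beta> f) (phi \<beta> g)"
  unfolding bracket_def bidegs_phi[OF assms(1)] comp_phi[OF assms(1)] phi_sum
  by (auto intro!: sum.cong simp: bracket_h_def phi_sum phi_cst phi_mult Sder_pow_phi[OF assms])

lemma modiso_phi:
  assumes "\<beta> \<noteq> 0" "a * \<beta> = a'" "b = \<beta> * b'"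
  shows "modular_iso (a,b,c) (a',b',c)"
  unfolding modular_iso_def
proof (simp, intro exI conjI allI impI)
  show "bij (phi \<beta>)"
    by (rule o_bij[where g = "phi (1/\<beta>)"]) (auto simp: phi_inv assms(1) phi_inv[of "1/\<beta>", simplified])
  show "phi \<beta> (f + g) = phi \<beta> f + phi \<beta> g" for f g by (rule phi_add)
  show "phi \<beta> (cst z * f) = cst z * phi \<beta> f" for z f by (rule phi_cst_mult)
  show "homog k p (phi \<beta> f)" if "homog k p f" for k p f
    using that by (simp add: homog_def keys_phi assms(1))
  show "phi \<beta> (bracket a b c j f g) = bracket a' b' c j (phi \<beta> f) (phi \<beta> g)" for j f g
    by (rule bracket_phi[OF assms])
qed




lemma homog_single: "homog (mono_wt m) (mono_ind m) (Poly_Mapping.single m c)"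
  by (simp add: homog_def)

lemma single_nz: "c \<noteq> 0 \<Longrightarrow> Poly_Mapping.single m c \<noteq> 0"
  by (metis lookup_single_eq lookup_zero)

lemma homog_comp: "homog k p f \<Longrightarrow> comp k p f = f"
  unfolding comp_def homog_def
  by (subst (2) poly_decomp) (rule sum.cong, auto)

lemma homog_bidegs: "homog k p f \<Longrightarrow> f \<noteq> 0 \<Longrightarrow> bidegs f = {(k,p)}"
proof -
  assume h: "homog k p f" and nz: "f \<noteq> 0"
  have ne: "Poly_Mapping.keys f \<noteq> {}" using nz by simp
  have "bidegs f = (\<lambda>m. (k,p)) ` Poly_Mapping.keys f"
    unfolding bidegs_def by (rule image_cong) (use h in \<open>simp_all add: homog_def\<close>)
  also obtain m0 where "m0 \<in> Poly_Mapping.keys f" using ne by blast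
  then have "(\<lambda>m. (k,p)) ` Poly_Mapping.keys f = {(k,p)}" by (rule image_constant)
  finally show ?thesis .
qed

lemma bracket_homog:
  "homog k p f \<Longrightarrow> f \<noteq> 0 \<Longrightarrow> homog l q g \<Longrightarrow> g \<noteq> 0 \<Longrightarrow>
   bracket a b c n f g = bracket_h a b c n k p l q f g"
  by (simp add: bracket_def homog_bidegs homog_comp)

lemma bracket_h0: "bracket_h a b c 0 k p l q f g = f * g"
  by (simp add: bracket_h_def cst_def zero_mono[symmetric])

lemma cst_neg: "cst (- x) * f = - (cst x * f)"
  by (simp add: cst_def single_uminus)


lemma bracket_h1: "bracket_h a b c 1 k p l q f g =
   cst (of_int k + c * of_int p) * (f * Sder a b g) - cst (of_int l + c * of_int q) * (Sder a b f * g)"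
proof -
  have s: "{0..1::nat} = {0,1}" by auto
  show ?thesis
    unfolding bracket_h_def s
    by (simp, subst cst_neg[symmetric], simp)
qed

lemma pdE4_single: "pdE4 (Poly_Mapping.single (i,j,k,l) x) = Poly_Mapping.single (i-1,j,k,l) (of_nat i * x)"
  by (cases "x = 0") (simp_all add: pdE4_def)
lemma pdE6_single: "pdE6 (Poly_Mapping.single (i,j,k,l) x) = Poly_Mapping.single (i,j-1,k,l) (of_nat j * x)"
  by (cases "x = 0") (simp_all add: pdE6_def)
lemma pdA_single: "pdA (Poly_Mapping.single (i,j,k,l) x) = Poly_Mapping.single (i,j,k-1,l) (of_nat k * x)"
  by (cases "x = 0") (simp_all add: pdA_def)
lemma pdB_single: "pdB (Poly_Mapping.single (i,j,k,l) x) = Poly_Mapping.single (i,j,k,l-1) (of_nat l * x)"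
  by (cases "x = 0") (simp_all add: pdB_def)

lemma keys_sub_single:
  assumes "Poly_Mapping.keys F \<subseteq> {m0}" shows "F = Poly_Mapping.single m0 (Poly_Mapping.lookup F m0)"
  using assms by (intro poly_mapping_eqI) (auto simp: lookup_single when_def in_keys_iff)

lemma homog_unique:
  assumes "homog (mono_wt m0) (mono_ind m0) F"
    "\<And>m. mono_wt m = mono_wt m0 \<Longrightarrow> mono_ind m = mono_ind m0 \<Longrightarrow> m = m0"
  shows "F = Poly_Mapping.single m0 (Poly_Mapping.lookup F m0)"
  using assms by (intro keys_sub_single) (auto simp: homog_def)

lemma uniq_gen:
  assumes "mono_wt m = w" "mono_ind m = p"
  shows "\<exists>i j k l. m = (i,j,k,l) \<and> 4 * int i + 6 * int j - 2 * int k = w \<and> int k + int l = p"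
  using assms by (cases m) (auto simp: mono_wt_def mono_ind_def)

lemma uq4: "4 * int i + 6 * int j - 2 * int k = (4::int) \<Longrightarrow> int k + int l = 0 \<Longrightarrow> i = 1 \<and> j = 0 \<and> k = 0 \<and> l = 0"
  by (cases i; cases j; cases k; cases l; simp; presburger)
lemma uq6: "4 * int i + 6 * int j - 2 * int k = (6::int) \<Longrightarrow> int k + int l = 0 \<Longrightarrow> i = 0 \<and> j = 1 \<and> k = 0 \<and> l = 0"
  by (cases i; cases j; cases k; cases l; simp; presburger)
lemma uqA: "4 * int i + 6 * int j - 2 * int k = (-2::int) \<Longrightarrow> int k + int l = 1 \<Longrightarrow> i = 0 \<and> j = 0 \<and> k = 1 \<and> l = 0"
  by (cases i; cases j; cases k; cases l; simp; presburger)
lemma uqB: "4 * int i + 6 * int j - 2 * int k = (0::int) \<Longrightarrow> int k + int l = 1 \<Longrightarrow> i = 0 \<and> j = 0 \<and> k = 0 \<and> l = 1"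
  by (cases i; cases j; cases k; cases l; simp; presburger)

lemma uniq_E4: "mono_wt m = 4 \<Longrightarrow> mono_ind m = 0 \<Longrightarrow> m = (1,0,0,0)"
  by (cases m) (use uq4 in \<open>auto simp: mono_wt_def mono_ind_def\<close>)
lemma uniq_E6: "mono_wt m = 6 \<Longrightarrow> mono_ind m = 0 \<Longrightarrow> m = (0,1,0,0)"
  by (cases m) (use uq6 in \<open>auto simp: mono_wt_def mono_ind_def\<close>)
lemma uniq_A: "mono_wt m = -2 \<Longrightarrow> mono_ind m = 1 \<Longrightarrow> m = (0,0,1,0)"
  by (cases m) (use uqA in \<open>auto simp: mono_wt_def mono_ind_def\<close>)
lemma uniq_B: "mono_wt m = 0 \<Longrightarrow> mono_ind m = 1 \<Longrightarrow> m = (0,0,0,1)"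
  by (cases m) (use uqB in \<open>auto simp: mono_wt_def mono_ind_def\<close>)



lemma Sder_single: "Sder a b (Poly_Mapping.single (i,j,k,l) x) =
   Poly_Mapping.single (i-1,j+1,k,l) (- of_nat i * x / 3)
 + Poly_Mapping.single (i+2,j-1,k,l) (- of_nat j * x / 2)
 + Poly_Mapping.single (i,j,k-1,l+1) (a * of_nat k * x)
 + Poly_Mapping.single (i+1,j,k+1,l-1) (b * of_nat l * x)"
  by (simp add: Sder_def pdE4_single pdE6_single pdA_single pdB_single cst_def E4_def E6_def vA_def vB_def
       power2_eq_square mult_single mult_ac)





lemma bracket1_single:
  "x \<noteq> 0 \<Longrightarrow> y \<noteq> 0 \<Longrightarrow> bracket a b c 1 (Poly_Mapping.single m x) (Poly_Mapping.single n y) =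
    cst (of_int (mono_wt m) + c * of_int (mono_ind m)) * (Poly_Mapping.single m x * Sder a b (Poly_Mapping.single n y))
  - cst (of_int (mono_wt n) + c * of_int (mono_ind n)) * (Sder a b (Poly_Mapping.single m x) * Poly_Mapping.single n y)"
proof -
  assume xy: "x \<noteq> 0" "y \<noteq> 0"
  have "bracket a b c 1 (Poly_Mapping.single m x) (Poly_Mapping.single n y) = bracket_h a b c 1 (mono_wt m) (mono_ind m) (mono_wt n) (mono_ind n) (Poly_Mapping.single m x) (Poly_Mapping.single n y)"
    by (rule bracket_homog) (simp_all add: homog_single single_nz xy)
  then show ?thesis by (simp only: bracket_h1)
qed

lemma alg_final:
  fixes a b c a' b' c' l4 l6 lA lB :: complex
  assumes E1': "l4 * l4 = l6" and E2': "a * lB = a' * lA"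
  and E3': "l4 * (lA * 2) + (c * (l6 * (lA * 3)) - l6 * (lA * 6)) / 3 = c' * (l4 * lA)"
  and E4': "b * (l4 * lA) = b' * lB" and E5': "c * l6 = c' * l4"
  and g4: "l4 \<noteq> 0" and gA: "lA \<noteq> 0" and gB: "lB \<noteq> 0"
  shows "c = c' \<and> (\<exists>\<alpha> \<beta>. \<alpha> \<noteq> 0 \<and> \<beta> \<noteq> 0 \<and> a * \<beta> = a' * \<alpha> \<and> b * \<alpha> = b' * \<beta>)"
proof -
  have "l4 * (lA * 6) + c * (l6 * (lA * 3)) = l6 * (lA * 6) + c' * (l4 * (lA * 3))" using E3' by (simp add: field_simps)
  then have "3 * (lA * (2*l4 + c*l6 - 2*l6)) = 3 * (lA * (c'*l4))" by (simp add: algebra_simps)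
  then have "lA * (2*l4 + c*l6 - 2*l6) = lA * (c'*l4)" by simp
  then have h3: "2*l4 + c*l6 - 2*l6 = c'*l4" using gA by simp
  have "2*l4 + c*l6 - 2*l6 = c*l6" using h3 E5' by simp
  then have "2*l4 = 2*l6" by (simp add: algebra_simps)
  then have "l4 = l6" by simp
  with E1' have "l4 = l4 * l4" by simp
  with g4 have "l4 = 1" by (simp add: mult_cancel_left1)
  with \<open>l4 = l6\<close> E5' have cc: "c = c'" by simp
  have bb: "b * lA = b' * lB" using E4' \<open>l4 = 1\<close> by simp
  have X: "lA \<noteq> 0 \<and> lB \<noteq> 0 \<and> a * lB = a' * lA \<and> b * lA = b' * lB"
    using gA gB E2' bb by (intro conjI)
  show ?thesis
    apply (rule conjI[OF cc])
    apply (rule exI[where x=lA], rule exI[where x=lB])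
    by (rule X)
qed

lemma noniso:
  assumes "modular_iso (a,b,c) (a',b',c')"
  shows "c = c' \<and> (\<exists>\<alpha> \<beta>. \<alpha> \<noteq> 0 \<and> \<beta> \<noteq> 0 \<and> a * \<beta> = a' * \<alpha> \<and> b * \<alpha> = b' * \<beta>)"
proof -
  from assms obtain \<phi> where bij: "bij \<phi>" and add: "\<And>f g. \<phi> (f+g) = \<phi> f + \<phi> g"
    and sc: "\<And>z f. \<phi> (cst z * f) = cst z * \<phi> f" and hom: "\<And>k p f. homog k p f \<Longrightarrow> homog k p (\<phi> f)"
    and br: "\<And>j f g. \<phi> (bracket a b c j f g) = bracket a' b' c' j (\<phi> f) (\<phi> g)"
    unfolding modular_iso_def by auto
  have inj: "inj \<phi>" using bij bij_is_inj by auto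
  have z: "\<phi> 0 = 0" using add[of 0 0] by simp
  have sub: "\<phi> (f - g) = \<phi> f - \<phi> g" for f g using add[of "f - g" g] by (simp add: algebra_simps)
  have nz: "\<phi> f \<noteq> 0" if "f \<noteq> 0" for f using inj z that by (metis injD)
  define P where "P m = \<phi> (Poly_Mapping.single m 1)" for m
  have Ps: "\<phi> (Poly_Mapping.single m w) = cst w * P m" for m w
    using sc[of w "Poly_Mapping.single m 1"] by (simp add: P_def cst_mult_single)
  have Ph: "homog (mono_wt m) (mono_ind m) (P m)" for m using hom homog_single P_def by auto
  have Pnz: "P m \<noteq> 0" for m unfolding P_def by (rule nz) (simp add: single_nz)
  have Pm: "P (m+n) = P m * P n" for m n
  proof -
    have "\<phi> (bracket a b c 0 (Poly_Mapping.single m 1) (Poly_Mapping.single n 1)) = bracket a' b' c' 0 (P m) (P n)"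
      using br P_def by simp
    moreover have "bracket a b c 0 (Poly_Mapping.single m 1) (Poly_Mapping.single n 1) = Poly_Mapping.single (m+n) 1"
      by (simp add: bracket_homog[OF homog_single _ homog_single] single_nz bracket_h0 mult_single)
    moreover have "bracket a' b' c' 0 (P m) (P n) = P m * P n"
      by (simp add: bracket_homog[OF Ph Pnz Ph Pnz] bracket_h0)
    ultimately show ?thesis by (simp add: P_def)
  qed
  have gen: "P m0 = Poly_Mapping.single m0 (Poly_Mapping.lookup (P m0) m0) \<and> Poly_Mapping.lookup (P m0) m0 \<noteq> 0"
    if "\<And>m. mono_wt m = mono_wt m0 \<Longrightarrow> mono_ind m = mono_ind m0 \<Longrightarrow> m = m0" for m0
  proof -
    have e: "P m0 = Poly_Mapping.single m0 (Poly_Mapping.lookup (P m0) m0)"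
      by (rule homog_unique[OF Ph that])
    then show ?thesis using Pnz[of m0] by (metis single_zero)
  qed
  define l4 where "l4 = Poly_Mapping.lookup (P (1,0,0,0)) (1,0,0,0)"
  define l6 where "l6 = Poly_Mapping.lookup (P (0,1,0,0)) (0,1,0,0)"
  define lA where "lA = Poly_Mapping.lookup (P (0,0,1,0)) (0,0,1,0)"
  define lB where "lB = Poly_Mapping.lookup (P (0,0,0,1)) (0,0,0,1)"
  have g4: "P (1,0,0,0) = Poly_Mapping.single (1,0,0,0) l4" "l4 \<noteq> 0"
  proof -
    have w: "mono_wt (1,0,0,0) = 4" "mono_ind (1,0,0,0) = 0" by (simp_all add: mono_wt_def mono_ind_def)
    have "\<And>m. mono_wt m = mono_wt (1,0,0,0) \<Longrightarrow> mono_ind m = mono_ind (1,0,0,0) \<Longrightarrow> m = (1,0,0,0)"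
      unfolding w by (rule uniq_E4)
    from gen[OF this] show "P (1,0,0,0) = Poly_Mapping.single (1,0,0,0) l4" "l4 \<noteq> 0" unfolding l4_def by auto
  qed
  have g6: "P (0,1,0,0) = Poly_Mapping.single (0,1,0,0) l6" "l6 \<noteq> 0"
  proof -
    have w: "mono_wt (0,1,0,0) = 6" "mono_ind (0,1,0,0) = 0" by (simp_all add: mono_wt_def mono_ind_def)
    have "\<And>m. mono_wt m = mono_wt (0,1,0,0) \<Longrightarrow> mono_ind m = mono_ind (0,1,0,0) \<Longrightarrow> m = (0,1,0,0)"
      unfolding w by (rule uniq_E6)
    from gen[OF this] show "P (0,1,0,0) = Poly_Mapping.single (0,1,0,0) l6" "l6 \<noteq> 0" unfolding l6_def by auto
  qed
  have gA: "P (0,0,1,0) = Poly_Mapping.single (0,0,1,0) lA" "lA \<noteq> 0"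
  proof -
    have w: "mono_wt (0,0,1,0) = -2" "mono_ind (0,0,1,0) = 1" by (simp_all add: mono_wt_def mono_ind_def)
    have "\<And>m. mono_wt m = mono_wt (0,0,1,0) \<Longrightarrow> mono_ind m = mono_ind (0,0,1,0) \<Longrightarrow> m = (0,0,1,0)"
      unfolding w by (rule uniq_A)
    from gen[OF this] show "P (0,0,1,0) = Poly_Mapping.single (0,0,1,0) lA" "lA \<noteq> 0" unfolding lA_def by auto
  qed
  have gB: "P (0,0,0,1) = Poly_Mapping.single (0,0,0,1) lB" "lB \<noteq> 0"
  proof -
    have w: "mono_wt (0,0,0,1) = 0" "mono_ind (0,0,0,1) = 1" by (simp_all add: mono_wt_def mono_ind_def)
    have "\<And>m. mono_wt m = mono_wt (0,0,0,1) \<Longrightarrow> mono_ind m = mono_ind (0,0,0,1) \<Longrightarrow> m = (0,0,0,1)"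
      unfolding w by (rule uniq_B)
    from gen[OF this] show "P (0,0,0,1) = Poly_Mapping.single (0,0,0,1) lB" "lB \<noteq> 0" unfolding lB_def by auto
  qed
  have Pc: "P m = Poly_Mapping.single m (x * y)"
    if "m = m1 + m2" "P m1 = Poly_Mapping.single m1 x" "P m2 = Poly_Mapping.single m2 y" for m m1 m2 x y
    using that by (simp add: Pm mult_single)
  have p2: "P (Suc (Suc 0), 0, 0, 0) = Poly_Mapping.single (Suc (Suc 0), 0, 0, 0) (l4*l4)"
    by (rule Pc[OF _ g4(1) g4(1)]) simp
  have p3: "P (Suc (Suc (Suc 0)), 0, 0, 0) = Poly_Mapping.single (Suc (Suc (Suc 0)), 0, 0, 0) (l4*l4*l4)"
    by (rule Pc[OF _ p2 g4(1)]) simp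
  have p66: "P (0, Suc (Suc 0), 0, 0) = Poly_Mapping.single (0, Suc (Suc 0), 0, 0) (l6*l6)"
    by (rule Pc[OF _ g6(1) g6(1)]) simp
  have p4B: "P (Suc 0, 0, 0, Suc 0) = Poly_Mapping.single (Suc 0, 0, 0, Suc 0) (l4*lB)"
    by (rule Pc[OF _ g4(1) gB(1)]) simp
  have p6A: "P (0, Suc 0, Suc 0, 0) = Poly_Mapping.single (0, Suc 0, Suc 0, 0) (l6*lA)"
    by (rule Pc[OF _ g6(1) gA(1)]) simp
  have p44A: "P (Suc (Suc 0), 0, Suc 0, 0) = Poly_Mapping.single (Suc (Suc 0), 0, Suc 0, 0) (l4*l4*lA)"
    by (rule Pc[OF _ p2 gA(1)]) simp
  have p6B: "P (0, Suc 0, 0, Suc 0) = Poly_Mapping.single (0, Suc 0, 0, Suc 0) (l6*lB)"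
    by (rule Pc[OF _ g6(1) gB(1)]) simp
  note Pfacts = g4(1)[unfolded One_nat_def] g6(1)[unfolded One_nat_def] gA(1)[unfolded One_nat_def] gB(1)[unfolded One_nat_def] p2 p3 p66 p4B p6A p44A p6B
  have E1: "Poly_Mapping.lookup (\<phi> (bracket a b c 1 (Poly_Mapping.single (1,0,0,0) 1) (Poly_Mapping.single (0,1,0,0) 1))) (3,0,0,0)
        = Poly_Mapping.lookup (bracket a' b' c' 1 (Poly_Mapping.single (1,0,0,0) l4) (Poly_Mapping.single (0,1,0,0) l6)) (3,0,0,0)"
    using br[of 1 "Poly_Mapping.single (1,0,0,0) 1" "Poly_Mapping.single (0,1,0,0) 1"]
    unfolding P_def[symmetric] g4(1) g6(1) by simp
  have E2: "Poly_Mapping.lookup (\<phi> (bracket a b c 1 (Poly_Mapping.single (1,0,0,0) 1) (Poly_Mapping.single (0,0,1,0) 1))) (1,0,0,1)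
        = Poly_Mapping.lookup (bracket a' b' c' 1 (Poly_Mapping.single (1,0,0,0) l4) (Poly_Mapping.single (0,0,1,0) lA)) (1,0,0,1)"
    using br[of 1 "Poly_Mapping.single (1,0,0,0) 1" "Poly_Mapping.single (0,0,1,0) 1"]
    unfolding P_def[symmetric] g4(1) gA(1) by simp
  have E3: "Poly_Mapping.lookup (\<phi> (bracket a b c 1 (Poly_Mapping.single (1,0,0,0) 1) (Poly_Mapping.single (0,0,1,0) 1))) (0,1,1,0)
        = Poly_Mapping.lookup (bracket a' b' c' 1 (Poly_Mapping.single (1,0,0,0) l4) (Poly_Mapping.single (0,0,1,0) lA)) (0,1,1,0)"
    using br[of 1 "Poly_Mapping.single (1,0,0,0) 1" "Poly_Mapping.single (0,0,1,0) 1"]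
    unfolding P_def[symmetric] g4(1) gA(1) by simp
  have E4: "Poly_Mapping.lookup (\<phi> (bracket a b c 1 (Poly_Mapping.single (1,0,0,0) 1) (Poly_Mapping.single (0,0,0,1) 1))) (2,0,1,0)
        = Poly_Mapping.lookup (bracket a' b' c' 1 (Poly_Mapping.single (1,0,0,0) l4) (Poly_Mapping.single (0,0,0,1) lB)) (2,0,1,0)"
    using br[of 1 "Poly_Mapping.single (1,0,0,0) 1" "Poly_Mapping.single (0,0,0,1) 1"]
    unfolding P_def[symmetric] g4(1) gB(1) by simp
  have E5: "Poly_Mapping.lookup (\<phi> (bracket a b c 1 (Poly_Mapping.single (1,0,0,0) 1) (Poly_Mapping.single (0,0,0,1) 1))) (0,1,0,1)
        = Poly_Mapping.lookup (bracket a' b' c' 1 (Poly_Mapping.single (1,0,0,0) l4) (Poly_Mapping.single (0,0,0,1) lB)) (0,1,0,1)"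
    using br[of 1 "Poly_Mapping.single (1,0,0,0) 1" "Poly_Mapping.single (0,0,0,1) 1"]
    unfolding P_def[symmetric] g4(1) gB(1) by simp
  note SS[simp] = Sder_single mono_wt_def mono_ind_def mult_single cst_mult_single sub add z Ps Pfacts lookup_add lookup_minus lookup_single algebra_simps eval_nat_numeral
  note E1s = E1[unfolded bracket1_single[OF one_neq_zero one_neq_zero] bracket1_single[OF g4(2) g6(2)], simplified]
  note E2s = E2[unfolded bracket1_single[OF one_neq_zero one_neq_zero] bracket1_single[OF g4(2) gA(2)], simplified]
  note E3s = E3[unfolded bracket1_single[OF one_neq_zero one_neq_zero] bracket1_single[OF g4(2) gA(2)], simplified]
  note E4s = E4[unfolded bracket1_single[OF one_neq_zero one_neq_zero] bracket1_single[OF g4(2) gB(2)], simplified]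
  note E5s = E5[unfolded bracket1_single[OF one_neq_zero one_neq_zero] bracket1_single[OF g4(2) gB(2)], simplified]
  have E1': "l4 * l4 = l6" using E1s g4(2) by blast
  have E2': "a * lB = a' * lA" using E2s g4(2) by blast
  have E4': "b * (l4 * lA) = b' * lB" using E4s g4(2) by blast
  have E5': "c * l6 = c' * l4" using E5s gB(2) by blast
  show ?thesis using alg_final[OF E1' E2' E3s E4' E5' g4(2) gA(2) gB(2)] .
qed


lemma canon_eq:
  fixes a b a2 b2 \<alpha> \<beta> :: complex
  assumes ab: "\<alpha> \<noteq> 0" "\<beta> \<noteq> 0" "a * \<beta> = a2 * \<alpha>" "b * \<alpha> = b2 * \<beta>"
  and c1: "(a = 1) \<or> (a = 0 \<and> b = 1) \<or> (a = 0 \<and> b = 0)"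
  and c2: "(a2 = 1) \<or> (a2 = 0 \<and> b2 = 1) \<or> (a2 = 0 \<and> b2 = 0)"
  shows "a = a2 \<and> b = b2"
  using c1 c2
proof (elim disjE conjE)
  assume "a = 1" "a2 = 1"
  with ab have "\<beta> = \<alpha>" by simp
  with ab show ?thesis using \<open>a = 1\<close> \<open>a2 = 1\<close> by simp
qed (use ab in simp_all)

theorem mainTheorem2:
  shows "(\<forall>a' b' c' :: complex.
            (\<exists>b c. modular_iso (a', b', c') (1, b, c))
          \<or> (\<exists>c. modular_iso (a', b', c') (0, 1, c))
          \<or> (\<exists>c. modular_iso (a', b', c') (0, 0, c)))
       \<and> (\<forall>t \<in> canonical_list. \<forall>t' \<in> canonical_list. t \<noteq> t' \<longrightarrow> \<not> modular_iso t t')"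
proof (intro conjI allI ballI impI)
  fix a' b' c' :: complex
  show "(\<exists>b c. modular_iso (a', b', c') (1, b, c))
          \<or> (\<exists>c. modular_iso (a', b', c') (0, 1, c))
          \<or> (\<exists>c. modular_iso (a', b', c') (0, 0, c))"
  proof (cases "a' = 0")
    case False
    have "modular_iso (a', b', c') (1, a' * b', c')"
      by (rule modiso_phi[where \<beta> = "1/a'"]) (use False in auto)
    then show ?thesis by blast
  next
    case a0: True
    show ?thesis
    proof (cases "b' = 0")
      case False
      have "modular_iso (a', b', c') (0, 1, c')"
        by (rule modiso_phi[where \<beta> = "b'"]) (use False a0 in auto)
      then show ?thesis by blast
    next
      case True
      have "modular_iso (a', b', c') (0, 0, c')"
        by (rule modiso_phi[where \<beta> = "1"]) (use True a0 in auto)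
      then show ?thesis by blast
    qed
  qed
next
  fix t t' assume t: "t \<in> canonical_list" and t': "t' \<in> canonical_list" and ne: "t \<noteq> t'"
  show "\<not> modular_iso t t'"
  proof
    assume iso: "modular_iso t t'"
    obtain a b c where tt: "t = (a,b,c)" by (cases t) auto
    obtain a2 b2 c2 where tt': "t' = (a2,b2,c2)" by (cases t') auto
    from noniso[OF iso[unfolded tt tt']] obtain \<alpha> \<beta> where cc: "c = c2" and
      ab: "\<alpha> \<noteq> 0" "\<beta> \<noteq> 0" "a * \<beta> = a2 * \<alpha>" "b * \<alpha> = b2 * \<beta>" by blast
    from t have c1: "(a = 1) \<or> (a = 0 \<and> b = 1) \<or> (a = 0 \<and> b = 0)" unfolding tt canonical_list_def by auto
    from t' have c2: "(a2 = 1) \<or> (a2 = 0 \<and> b2 = 1) \<or> (a2 = 0 \<and> b2 = 0)" unfolding tt' canonical_list_def by auto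
    have "t = t'"
    proof -
      have "a = a2 \<and> b = b2" by (rule canon_eq[OF ab c1 c2])
      with cc show ?thesis by (simp add: tt tt')
    qed
    with ne show False by simp
  qed
qed

end
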